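(* Let $X$ be a proper real random variable with $\mathrm{supp}(X)=\mathbb R$ and a bounded unimodal density $f_X$. Each of the following conditions implies that $X$ has a regular tail: (i) $f_X(x)=O(|x|^{-a})$ and $f_X(x)=\Omega(|x|^{-b})$ as $|x|\to\infty$, for some $b\ge a>1$; (ii) $f_X(x)=O(e^{-b|x|^a})$ and $f_X(x)=\Omega(e^{-b|x|^a})$ as $|x|\to\infty$, for some $a\ge 1$, $b>0$.
   Context: A proper (absolutely continuous) real random variable $X$ with density $f_X$ and c.d.f. $F_X$ is said to have a regular tail if there exist $\gamma\in(0,\tfrac12]$ and positive constants $c_0,c_1,\alpha_0,\alpha_1$ such that $c_0 f_X^{\alpha_0}(x)\le \min(F_X(x),1-F_X(x))\le c_1 f_X^{\alpha_1}(x)$ for every $x\in\mathrm{supp}(X)$ satisfying $\min(F_X(x),1-F_X(x))\le\gamma$. *)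

theory Defs
  imports "HOL-Probability.Probability" "HOL-Library.Landau_Symbols"
begin

abbreviation law :: "'a measure \<Rightarrow> ('a \<Rightarrow> real) \<Rightarrow> real measure" where
  "law M X \<equiv> distr M borel X"

definition rv_support :: "'a measure \<Rightarrow> ('a \<Rightarrow> real) \<Rightarrow> real set" where
  "rv_support M X = {x. \<forall>U. open U \<and> x \<in> U \<longrightarrow> 0 < measure (law M X) U}"

definition unimodal :: "(real \<Rightarrow> real) \<Rightarrow> bool" where
  "unimodal f \<longleftrightarrow> (\<exists>m. mono_on {..m} f \<and> antimono_on {m..} f)"

text \<open>Regular tail of X with (chosen version of the) density f.\<close>
definition regular_tail :: "'a measure \<Rightarrow> ('a \<Rightarrow> real) \<Rightarrow> (real \<Rightarrow> real) \<Rightarrow> bool" where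
  "regular_tail M X f \<longleftrightarrow>
     (\<exists>\<gamma> c0 c1 \<alpha>0 \<alpha>1::real. 0 < \<gamma> \<and> \<gamma> \<le> 1/2 \<and> 0 < c0 \<and> 0 < c1 \<and> 0 < \<alpha>0 \<and> 0 < \<alpha>1 \<and>
        (\<forall>x \<in> rv_support M X.
           min (cdf (law M X) x) (1 - cdf (law M X) x) \<le> \<gamma> \<longrightarrow>
             c0 * f x powr \<alpha>0 \<le> min (cdf (law M X) x) (1 - cdf (law M X) x) \<and>
             min (cdf (law M X) x) (1 - cdf (law M X) x) \<le> c1 * f x powr \<alpha>1))"

end

theory Submission imports Defs begin

lemma tail_up:
  fixes g :: "real \<Rightarrow> real"
  assumes x: "x > 0" and p: "p > 1" and K: "K \<ge> 0" and gb: "\<And>t. t \<ge> x \<Longrightarrow> g t \<le> K * t powr (-p)"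
  shows "(\<integral>\<^sup>+t. ennreal (g t) * indicator {x..} t \<partial>lborel) \<le> ennreal (K * x powr (1-p) / (p-1))"
proof -
  have hi: "((\<lambda>t. K * t powr (-p)) has_integral K * (-(x powr (-p+1)) / (-p+1))) {x..}"
    using has_integral_powr_to_inf[of "-p" x] x p by (intro has_integral_mult_right) auto
  have "(\<integral>\<^sup>+t. ennreal (g t) * indicator {x..} t \<partial>lborel) \<le> (\<integral>\<^sup>+t. ennreal (K * t powr (-p)) * indicator {x..} t \<partial>lborel)"
    by (intro nn_integral_mono) (auto simp: indicator_def gb intro!: ennreal_leI)
  also have "\<dots> = ennreal (K * (-(x powr (-p+1)) / (-p+1)))"
    using x K by (intro nn_integral_has_integral_lebesgue' hi) auto
  also have "K * (-(x powr (-p+1)) / (-p+1)) = K * x powr (1-p) / (p-1)"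
    using p by (simp add: field_simps)
  finally show ?thesis .
qed

lemma tail_low:
  fixes g :: "real \<Rightarrow> real"
  assumes m: "m \<ge> 0" and gb: "\<And>t. x < t \<Longrightarrow> t \<le> x+1 \<Longrightarrow> m \<le> g t"
  shows "ennreal m \<le> (\<integral>\<^sup>+t. ennreal (g t) * indicator {x<..} t \<partial>lborel)"
proof -
  have "ennreal m = (\<integral>\<^sup>+t. ennreal m * indicator {x<..x+1} t \<partial>lborel)"
    by (simp add: nn_integral_cmult_indicator)
  also have "\<dots> \<le> (\<integral>\<^sup>+t. ennreal (g t) * indicator {x<..} t \<partial>lborel)"
    by (intro nn_integral_mono) (auto simp: indicator_def gb intro!: ennreal_leI)
  finally show ?thesis .
qed



definition TP :: "(real \<Rightarrow> real) \<Rightarrow> real \<Rightarrow> real \<Rightarrow> bool" where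
 "TP g \<alpha>0 \<alpha>1 \<longleftrightarrow> (\<exists>R c0 c1. R > 0 \<and> c0 > 0 \<and> c1 > 0 \<and> (\<forall>x\<ge>R. \<forall>s. 0 \<le> s \<and>
    (\<integral>\<^sup>+t. ennreal (g t) * indicator {x<..} t \<partial>lborel) \<le> ennreal s \<and>
    ennreal s \<le> (\<integral>\<^sup>+t. ennreal (g t) * indicator {x..} t \<partial>lborel) \<longrightarrow>
    c0 * g x powr \<alpha>0 \<le> s \<and> s \<le> c1 * g x powr \<alpha>1))"

lemma case_poly:
  fixes g :: "real \<Rightarrow> real"
  assumes g0: "\<And>t. 0 \<le> g t" and a: "1 < a" and ab: "a \<le> b" and C: "C > 0" and c: "c > 0" and R: "R \<ge> 1"
   and up: "\<And>t. t \<ge> R \<Longrightarrow> g t \<le> C * t powr (-a)" and low: "\<And>t. t \<ge> R \<Longrightarrow> c * t powr (-b) \<le> g t"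
  shows "TP g (b/a) ((a-1)/b)"
  unfolding TP_def
proof (intro exI conjI allI impI)
  define c0 where "c0 = c * 2 powr (-b) / C powr (b/a)"
  define c1 where "c1 = C / ((a-1) * c powr ((a-1)/b))"
  show "R > 0" using R by simp
  show "c0 > 0" using c C unfolding c0_def by simp
  show "c1 > 0" using c C a unfolding c1_def by simp
  fix x s assume x: "R \<le> x" and H: "0 \<le> s \<and>
    (\<integral>\<^sup>+t. ennreal (g t) * indicator {x<..} t \<partial>lborel) \<le> ennreal s \<and>
    ennreal s \<le> (\<integral>\<^sup>+t. ennreal (g t) * indicator {x..} t \<partial>lborel)"
  have xpos: "x > 0" "x \<ge> 1" using x R by auto
  have b: "b > 0" using a ab by simp
  have "ennreal s \<le> ennreal (C * x powr (1-a) / (a-1))"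
    using H tail_up[of x a C g] xpos a C up x by (meson order_trans less_imp_le)
  hence s1: "s \<le> C * x powr (1-a) / (a-1)"
    using C a by (subst (asm) ennreal_le_iff) auto
  have "c * x powr (-b) \<le> g x" using low x by simp
  hence "(c * x powr (-b)) powr ((a-1)/b) \<le> g x powr ((a-1)/b)"
    using a b c by (intro powr_mono2) auto
  also have "(c * x powr (-b)) powr ((a-1)/b) = c powr ((a-1)/b) * x powr (1-a)"
  proof -
    have e: "-b * ((a-1)/b) = 1 - a" using b by (simp add: field_simps)
    show ?thesis using c xpos b by (simp add: powr_mult powr_powr e)
  qed
  finally have g1: "c powr ((a-1)/b) * x powr (1-a) \<le> g x powr ((a-1)/b)" .
  have "C * x powr (1-a) / (a-1) = c1 * (c powr ((a-1)/b) * x powr (1-a))"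
    unfolding c1_def using c a by (simp add: field_simps)
  also have "\<dots> \<le> c1 * g x powr ((a-1)/b)"
    using g1 \<open>c1 > 0\<close> by (intro mult_left_mono) auto
  finally show "s \<le> c1 * g x powr ((a-1)/b)" using s1 by linarith
  have m: "c * (2*x) powr (-b) \<le> g t" if "x < t" "t \<le> x+1" for t
  proof -
    have "(2*x) powr (-b) \<le> t powr (-b)" using that xpos b by (intro powr_mono2') auto
    hence "c * (2*x) powr (-b) \<le> c * t powr (-b)" using c by simp
    also have "\<dots> \<le> g t" using low that x by simp
    finally show ?thesis .
  qed
  have "ennreal (c * (2*x) powr (-b)) \<le> ennreal s"
    using tail_low[of "c * (2*x) powr (-b)" x g, OF _ m] H c by (meson order_trans less_imp_le powr_ge_zero mult_nonneg_nonneg)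
  hence s0: "c * (2*x) powr (-b) \<le> s" using H by (subst (asm) ennreal_le_iff) auto
  have "g x \<le> C * x powr (-a)" using up x by simp
  hence "g x powr (b/a) \<le> (C * x powr (-a)) powr (b/a)"
    using a b g0 by (intro powr_mono2) auto
  also have "(C * x powr (-a)) powr (b/a) = C powr (b/a) * x powr (-b)"
    using C xpos a by (simp add: powr_mult powr_powr field_simps)
  finally have g2: "g x powr (b/a) \<le> C powr (b/a) * x powr (-b)" .
  have "c0 * g x powr (b/a) \<le> c0 * (C powr (b/a) * x powr (-b))"
    using g2 \<open>c0 > 0\<close> by (intro mult_left_mono) auto
  also have "\<dots> = c * (2*x) powr (-b)"
    unfolding c0_def using C xpos by (simp add: powr_mult field_simps)
  finally show "c0 * g x powr (b/a) \<le> s" using s0 by linarith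
qed


lemma exp_neg_le_sq: fixes y :: real assumes "y > 0" shows "exp (-y) \<le> 2 / y^2"
proof -
  have "y^2/2 \<le> exp y" using exp_lower_Taylor_quadratic[of y] assms by (smt (verit) zero_le_power2)
  hence "exp (-y) * (y^2/2) \<le> exp (-y) * exp y" by (intro mult_left_mono) auto
  hence "exp (-y) * (y^2/2) \<le> 1" by (simp add: exp_minus)
  thus ?thesis using assms by (simp add: field_simps)
qed

lemma case_exp:
  fixes g :: "real \<Rightarrow> real"
  assumes g0: "\<And>t. 0 \<le> g t" and a: "1 \<le> a" and b: "b > 0" and C: "C > 0" and c: "c > 0" and R: "R \<ge> 1"
   and up: "\<And>t. t \<ge> R \<Longrightarrow> g t \<le> C * exp (- b * t powr a)"
   and low: "\<And>t. t \<ge> R \<Longrightarrow> c * exp (- b * t powr a) \<le> g t"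
  shows "TP g (2 powr a) (1/2)"
  unfolding TP_def
proof (intro exI conjI allI impI)
  define c0 where "c0 = c / C powr (2 powr a)"
  define c1 where "c1 = C * 8 / (b^2 * c powr (1/2))"
  show "R > 0" using R by simp
  show "c0 > 0" using c C unfolding c0_def by simp
  show "c1 > 0" using c C b unfolding c1_def by simp
  fix x s assume x: "R \<le> x" and H: "0 \<le> s \<and>
    (\<integral>\<^sup>+t. ennreal (g t) * indicator {x<..} t \<partial>lborel) \<le> ennreal s \<and>
    ennreal s \<le> (\<integral>\<^sup>+t. ennreal (g t) * indicator {x..} t \<partial>lborel)"
  have xpos: "x > 0" "x \<ge> 1" using x R by auto
  define K where "K = C * exp (- b * x powr a / 2) * 8 / b^2"
  have K0: "K \<ge> 0" unfolding K_def using C by simp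
  have gup: "g t \<le> K * t powr (-2)" if t: "t \<ge> x" for t
  proof -
    have t1: "t \<ge> 1" "t > 0" using t xpos by auto
    have "x powr a \<le> t powr a" using t xpos a by (intro powr_mono2) auto
    hence "b * x powr a \<le> b * t powr a" using b by (intro mult_left_mono) auto
    hence "- b * t powr a \<le> - b * x powr a / 2 + - b * t powr a / 2" by linarith
    hence e1: "exp (- b * t powr a) \<le> exp (- b * x powr a / 2) * exp (- b * t powr a / 2)"
      by (simp add: exp_add[symmetric] del: exp_add)
    have "t = t powr 1" using t1 by simp
    also have "\<dots> \<le> t powr a" using t1 a by (intro powr_mono) auto
    finally have "exp (- b * t powr a / 2) \<le> exp (- (b * t / 2))" using b by simp
    also have "\<dots> \<le> 2 / (b * t / 2)^2" using b t1 by (intro exp_neg_le_sq) auto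
    also have "\<dots> = 8 / b^2 * t powr (-2)" using t1 b by (simp add: powr_minus powr_numeral field_simps)
    finally have e2: "exp (- b * t powr a / 2) \<le> 8 / b^2 * t powr (-2)" .
    have "g t \<le> C * exp (- b * t powr a)" using up t x by simp
    also have "\<dots> \<le> C * (exp (- b * x powr a / 2) * (8 / b^2 * t powr (-2)))"
    proof -
      have "exp (- b * x powr a / 2) * exp (- b * t powr a / 2) \<le> exp (- b * x powr a / 2) * (8 / b^2 * t powr (-2))"
        using e2 by (intro mult_left_mono) auto
      with e1 have "exp (- b * t powr a) \<le> exp (- b * x powr a / 2) * (8 / b^2 * t powr (-2))" by linarith
      thus ?thesis using C by (intro mult_left_mono) auto
    qed
    also have "\<dots> = K * t powr (-2)" unfolding K_def by simp
    finally show ?thesis .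
  qed
  have "ennreal s \<le> ennreal (K * x powr (1-2) / (2-1))"
  proof -
    have "(\<integral>\<^sup>+t. ennreal (g t) * indicator {x..} t \<partial>lborel) \<le> ennreal (K * x powr (1-2) / (2-1))"
      by (rule tail_up) (use xpos K0 gup in auto)
    thus ?thesis using H by (meson order_trans)
  qed
  hence "s \<le> K * x powr (1-2) / (2-1)"
    using K0 by (subst (asm) ennreal_le_iff) auto
  also have "\<dots> \<le> K" using K0 xpos by (simp add: powr_minus field_simps mult_left_mono[of 1 x K, simplified])
  finally have s1: "s \<le> K" .
  have "c * exp (- b * x powr a) \<le> g x" using low x by simp
  hence "(c * exp (- b * x powr a)) powr (1/2) \<le> g x powr (1/2)"
    using c by (intro powr_mono2) auto
  also have "(c * exp (- b * x powr a)) powr (1/2) = c powr (1/2) * exp (- b * x powr a / 2)"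
    using c by (simp add: powr_mult exp_powr_real)
  finally have g1: "c powr (1/2) * exp (- b * x powr a / 2) \<le> g x powr (1/2)" .
  have "K = c1 * (c powr (1/2) * exp (- b * x powr a / 2))"
    unfolding c1_def K_def using c b by (simp add: field_simps)
  also have "\<dots> \<le> c1 * g x powr (1/2)"
    using g1 \<open>c1 > 0\<close> by (intro mult_left_mono) auto
  finally show "s \<le> c1 * g x powr (1/2)" using s1 by linarith
  have m: "c * exp (- b * (2 powr a * x powr a)) \<le> g t" if "x < t" "t \<le> x+1" for t
  proof -
    have "t powr a \<le> (2*x) powr a" using that xpos a by (intro powr_mono2) auto
    also have "\<dots> = 2 powr a * x powr a" using xpos by (simp add: powr_mult)
    finally have "exp (- b * (2 powr a * x powr a)) \<le> exp (- b * t powr a)" using b by simp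
    hence "c * exp (- b * (2 powr a * x powr a)) \<le> c * exp (- b * t powr a)" using c by simp
    also have "\<dots> \<le> g t" using low that x by simp
    finally show ?thesis .
  qed
  have "ennreal (c * exp (- b * (2 powr a * x powr a))) \<le> ennreal s"
    using tail_low[of "c * exp (- b * (2 powr a * x powr a))" x g, OF _ m] H c
    by (meson order_trans less_imp_le exp_ge_zero mult_nonneg_nonneg)
  hence s0: "c * exp (- b * (2 powr a * x powr a)) \<le> s" using H by (subst (asm) ennreal_le_iff) auto
  have "g x \<le> C * exp (- b * x powr a)" using up x by simp
  hence "g x powr (2 powr a) \<le> (C * exp (- b * x powr a)) powr (2 powr a)"
    using g0 by (intro powr_mono2) auto
  also have "(C * exp (- b * x powr a)) powr (2 powr a) = C powr (2 powr a) * exp (- b * (2 powr a * x powr a))"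
    using C by (simp add: powr_mult exp_powr_real)
  finally have g2: "g x powr (2 powr a) \<le> C powr (2 powr a) * exp (- b * (2 powr a * x powr a))" .
  have "c0 * g x powr (2 powr a) \<le> c0 * (C powr (2 powr a) * exp (- b * (2 powr a * x powr a)))"
    using g2 \<open>c0 > 0\<close> by (intro mult_left_mono) auto
  also have "\<dots> = c * exp (- b * (2 powr a * x powr a))"
    unfolding c0_def using C by (simp add: field_simps)
  finally show "c0 * g x powr (2 powr a) \<le> s" using s0 by linarith
qed


lemma reflect_nn:
  fixes h :: "real \<Rightarrow> ennreal"
  assumes [measurable]: "h \<in> borel_measurable borel"
  shows "(\<integral>\<^sup>+t. h t \<partial>lborel) = (\<integral>\<^sup>+t. h (-t) \<partial>lborel)"
proof -
  have "(\<integral>\<^sup>+t. h t \<partial>lborel) = (\<integral>\<^sup>+t. h t \<partial>(distr lborel borel uminus))"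
    by (simp add: lborel_distr_uminus)
  also have "\<dots> = (\<integral>\<^sup>+t. h (-t) \<partial>lborel)"
    by (rule nn_integral_distr) auto
  finally show ?thesis .
qed

lemma assemble:
  fixes M :: "'a measure" and X :: "'a \<Rightarrow> real" and f :: "real \<Rightarrow> real"
  assumes P: "prob_space M"
    and Xm: "X \<in> borel_measurable M"
    and f0: "\<And>x. 0 \<le> f x"
    and fm: "f \<in> borel_measurable borel"
    and D: "distributed M lborel X (\<lambda>x. ennreal (f x))"
    and S: "rv_support M X = UNIV"
    and a0: "\<alpha>0 > 0" and a1: "\<alpha>1 > 0"
    and T1: "TP f \<alpha>0 \<alpha>1" and T2: "TP (\<lambda>t. f (-t)) \<alpha>0 \<alpha>1"
  shows "regular_tail M X f"
proof -
  define L where "L = distr M borel X"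
  have Ld: "L = density lborel (\<lambda>x. ennreal (f x))"
  proof -
    have "L = distr M lborel X" unfolding L_def by (rule distr_cong) auto
    thus ?thesis using distributed_distr_eq_density[OF D] by simp
  qed
  interpret P: prob_space M by (rule P)
  interpret L: real_distribution L unfolding L_def using Xm by simp
  have fmm[measurable]: "(\<lambda>x. ennreal (f x)) \<in> borel_measurable borel" using fm by measurable
  have emL: "emeasure L A = (\<integral>\<^sup>+ t. ennreal (f t) * indicator A t \<partial>lborel)" if "A \<in> sets borel" for A
    unfolding Ld using that by (subst emeasure_density) auto
  have pos: "0 < measure L U" if "open U" "x \<in> U" for U x
    using S that unfolding rv_support_def L_def by auto
  have cdfF: "cdf L x = measure L {..x}" for x by (simp add: cdf_def)
  have cdfC: "1 - cdf L x = measure L {x<..}" for x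
  proof -
    have "measure L (space L - {..x}) = 1 - measure L {..x}" by (rule L.prob_compl) auto
    moreover have "space L - {..x} = {x<..}" by auto
    ultimately show ?thesis by (simp add: cdfF)
  qed
  from T1 obtain R1 c0 c1 where R1: "R1 > 0" "c0 > 0" "c1 > 0" and B1: "\<And>x s. x \<ge> R1 \<Longrightarrow> 0 \<le> s \<Longrightarrow>
    (\<integral>\<^sup>+t. ennreal (f t) * indicator {x<..} t \<partial>lborel) \<le> ennreal s \<Longrightarrow>
    ennreal s \<le> (\<integral>\<^sup>+t. ennreal (f t) * indicator {x..} t \<partial>lborel) \<Longrightarrow>
    c0 * f x powr \<alpha>0 \<le> s \<and> s \<le> c1 * f x powr \<alpha>1" unfolding TP_def by blast
  from T2 obtain R2 d0 d1 where R2: "R2 > 0" "d0 > 0" "d1 > 0" and B2: "\<And>x s. x \<ge> R2 \<Longrightarrow> 0 \<le> s \<Longrightarrow>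
    (\<integral>\<^sup>+t. ennreal (f (-t)) * indicator {x<..} t \<partial>lborel) \<le> ennreal s \<Longrightarrow>
    ennreal s \<le> (\<integral>\<^sup>+t. ennreal (f (-t)) * indicator {x..} t \<partial>lborel) \<Longrightarrow>
    d0 * f (-x) powr \<alpha>0 \<le> s \<and> s \<le> d1 * f (-x) powr \<alpha>1" unfolding TP_def by blast
  define R where "R = max R1 R2"
  have R: "R > 0" "R \<ge> R1" "R \<ge> R2" using R1 R2 unfolding R_def by auto
  define e0 where "e0 = min c0 d0"
  define e1 where "e1 = max c1 d1"
  have e: "e0 > 0" "e1 > 0" "e0 \<le> c0" "e0 \<le> d0" "c1 \<le> e1" "d1 \<le> e1"
    using R1 R2 unfolding e0_def e1_def by auto
  have FR1: "cdf L (-R) > 0"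
  proof -
    have "0 < measure L {..<-R}" by (rule pos[of _ "-R-1"]) auto
    also have "\<dots> \<le> measure L {..-R}" by (rule L.finite_measure_mono) auto
    finally show ?thesis by (simp add: cdfF)
  qed
  have FR2: "1 - cdf L R > 0"
  proof -
    have "0 < measure L {R<..}" by (rule pos[of _ "R+1"]) auto
    thus ?thesis by (simp add: cdfC)
  qed
  define \<gamma> where "\<gamma> = min (1/2) (min (cdf L (-R) / 2) ((1 - cdf L R) / 2))"
  have g: "\<gamma> > 0" "\<gamma> \<le> 1/2" "\<gamma> < cdf L (-R)" "\<gamma> < 1 - cdf L R"
    using FR1 FR2 unfolding \<gamma>_def by (auto simp: min_def)
  have main: "\<forall>x \<in> rv_support M X. min (cdf L x) (1 - cdf L x) \<le> \<gamma> \<longrightarrow>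
      e0 * f x powr \<alpha>0 \<le> min (cdf L x) (1 - cdf L x) \<and>
          min (cdf L x) (1 - cdf L x) \<le> e1 * f x powr \<alpha>1"
  proof (intro ballI impI)
    fix x assume "x \<in> rv_support M X" and mn: "min (cdf L x) (1 - cdf L x) \<le> \<gamma>"
    have cases: "x \<ge> R \<or> x \<le> -R"
    proof (rule ccontr)
      assume "\<not> ?thesis"
      hence "-R \<le> x" "x \<le> R" by auto
      hence "cdf L (-R) \<le> cdf L x" "cdf L x \<le> cdf L R" by (auto intro: L.cdf_nondecreasing)
      thus False using mn g by linarith
    qed
    show "e0 * f x powr \<alpha>0 \<le> min (cdf L x) (1 - cdf L x) \<and>
          min (cdf L x) (1 - cdf L x) \<le> e1 * f x powr \<alpha>1"
    proof (cases "x \<ge> R")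
      case True
      have "cdf L (-R) \<le> cdf L x" using True R by (intro L.cdf_nondecreasing) auto
      hence mn2: "min (cdf L x) (1 - cdf L x) = 1 - cdf L x" using mn g by linarith
      define s where "s = 1 - cdf L x"
      have s0: "0 \<le> s" unfolding s_def using L.cdf_bounded_prob[of x] by simp
      have es: "ennreal s = (\<integral>\<^sup>+t. ennreal (f t) * indicator {x<..} t \<partial>lborel)"
        unfolding s_def cdfC by (simp add: L.emeasure_eq_measure[symmetric] emL)
      have es2: "ennreal s \<le> (\<integral>\<^sup>+t. ennreal (f t) * indicator {x..} t \<partial>lborel)"
        unfolding es by (intro nn_integral_mono) (auto simp: indicator_def)
      have "c0 * f x powr \<alpha>0 \<le> s \<and> s \<le> c1 * f x powr \<alpha>1"
        using B1[of x s] True R s0 es es2 by auto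
      moreover have "e0 * f x powr \<alpha>0 \<le> c0 * f x powr \<alpha>0" using e by (intro mult_right_mono) auto
      moreover have "c1 * f x powr \<alpha>1 \<le> e1 * f x powr \<alpha>1" using e by (intro mult_right_mono) auto
      ultimately show ?thesis unfolding mn2 s_def by linarith
    next
      case False
      with cases have xR: "x \<le> -R" by auto
      have "cdf L x \<le> cdf L R" using xR R by (intro L.cdf_nondecreasing) auto
      hence mn2: "min (cdf L x) (1 - cdf L x) = cdf L x" using mn g by linarith
      define s where "s = cdf L x"
      have s0: "0 \<le> s" unfolding s_def using L.cdf_nonneg[of x] by simp
      have "ennreal s = (\<integral>\<^sup>+t. ennreal (f t) * indicator {..x} t \<partial>lborel)"
        unfolding s_def cdfF by (simp add: L.emeasure_eq_measure[symmetric] emL)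
      also have "\<dots> = (\<integral>\<^sup>+t. ennreal (f (-t)) * indicator {..x} (-t) \<partial>lborel)"
        by (rule reflect_nn) measurable
      also have "\<dots> = (\<integral>\<^sup>+t. ennreal (f (-t)) * indicator {-x..} t \<partial>lborel)"
        by (intro nn_integral_cong) (auto simp: indicator_def)
      finally have es: "ennreal s = (\<integral>\<^sup>+t. ennreal (f (-t)) * indicator {-x..} t \<partial>lborel)" .
      have es2: "(\<integral>\<^sup>+t. ennreal (f (-t)) * indicator {-x<..} t \<partial>lborel) \<le> ennreal s"
        unfolding es by (intro nn_integral_mono) (auto simp: indicator_def)
      have "d0 * f (-(-x)) powr \<alpha>0 \<le> s \<and> s \<le> d1 * f (-(-x)) powr \<alpha>1"
        using B2[of "-x" s] xR R s0 es es2 by auto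
      hence "d0 * f x powr \<alpha>0 \<le> s \<and> s \<le> d1 * f x powr \<alpha>1" by simp
      moreover have "e0 * f x powr \<alpha>0 \<le> d0 * f x powr \<alpha>0" using e by (intro mult_right_mono) auto
      moreover have "d1 * f x powr \<alpha>1 \<le> e1 * f x powr \<alpha>1" using e by (intro mult_right_mono) auto
      ultimately show ?thesis unfolding mn2 s_def by linarith
    qed
  qed
  show ?thesis
    unfolding regular_tail_def L_def[symmetric] using main g e a0 a1 by blast
qed


theorem mainTheorem2:
  fixes M :: "'a measure" and X :: "'a \<Rightarrow> real" and f :: "real \<Rightarrow> real"
  assumes "prob_space M"
    and "X \<in> borel_measurable M"
    and "\<And>x. 0 \<le> f x"
    and "f \<in> borel_measurable borel"
    and "distributed M lborel X (\<lambda>x. ennreal (f x))"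
    and "rv_support M X = UNIV"
    and "\<exists>B. \<forall>x. f x \<le> B"
    and "unimodal f"
    and "(\<exists>a b::real. 1 < a \<and> a \<le> b \<and>
            f \<in> O[at_infinity](\<lambda>x. \<bar>x\<bar> powr (-a)) \<and>
            f \<in> \<Omega>[at_infinity](\<lambda>x. \<bar>x\<bar> powr (-b)))
       \<or> (\<exists>a b::real. 1 \<le> a \<and> 0 < b \<and>
            f \<in> O[at_infinity](\<lambda>x. exp (- b * \<bar>x\<bar> powr a)) \<and>
            f \<in> \<Omega>[at_infinity](\<lambda>x. exp (- b * \<bar>x\<bar> powr a)))"
  shows "regular_tail M X f"
  using assms(9)
proof (elim disjE exE conjE)
  fix a b :: real
  assume a: "1 < a" and ab: "a \<le> b" and O: "f \<in> O[at_infinity](\<lambda>x. \<bar>x\<bar> powr (-a))"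
    and Om: "f \<in> \<Omega>[at_infinity](\<lambda>x. \<bar>x\<bar> powr (-b))"
  from O obtain C where C: "C > 0" and EC: "eventually (\<lambda>x. norm (f x) \<le> C * norm (\<bar>x\<bar> powr (-a))) at_infinity"
    by (elim landau_o.bigE) auto
  from Om obtain c where c: "c > 0" and Ec: "eventually (\<lambda>x. c * norm (\<bar>x\<bar> powr (-b)) \<le> norm (f x)) at_infinity"
    by (elim landau_omega.bigE) auto
  from EC obtain R1 where R1: "\<And>x. R1 \<le> norm x \<Longrightarrow> norm (f x) \<le> C * norm (\<bar>x\<bar> powr (-a))"
    unfolding eventually_at_infinity by blast
  from Ec obtain R2 where R2: "\<And>x. R2 \<le> norm x \<Longrightarrow> c * norm (\<bar>x\<bar> powr (-b)) \<le> norm (f x)"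
    unfolding eventually_at_infinity by blast
  define R where "R = max 1 (max R1 R2)"
  have up: "f x \<le> C * \<bar>x\<bar> powr (-a)" and low: "c * \<bar>x\<bar> powr (-b) \<le> f x" if "R \<le> \<bar>x\<bar>" for x
    using R1[of x] R2[of x] that assms(3)[of x] unfolding R_def by auto
  have T1: "TP f (b/a) ((a-1)/b)"
  proof (rule case_poly[OF assms(3) a ab C c, of R])
    show "1 \<le> R" by (simp add: R_def)
  next
    fix t assume "R \<le> t" hence "R \<le> \<bar>t\<bar>" "t \<ge> 0" by (auto simp: R_def)
    thus "f t \<le> C * t powr - a" "c * t powr - b \<le> f t" using up[of t] low[of t] by auto
  qed
  have T2: "TP (\<lambda>t. f (-t)) (b/a) ((a-1)/b)"
  proof (rule case_poly[OF assms(3) a ab C c, of R])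
    show "1 \<le> R" by (simp add: R_def)
  next
    fix t assume "R \<le> t" hence "R \<le> \<bar>-t\<bar>" "t \<ge> 0" by (auto simp: R_def)
    thus "f (- t) \<le> C * t powr - a" "c * t powr - b \<le> f (- t)" using up[of "-t"] low[of "-t"] by auto
  qed
  show ?thesis
    by (rule assemble[OF assms(1-6) _ _ T1 T2]) (use a ab in auto)
next
  fix a b :: real
  assume a: "1 \<le> a" and b: "0 < b" and O: "f \<in> O[at_infinity](\<lambda>x. exp (- b * \<bar>x\<bar> powr a))"
    and Om: "f \<in> \<Omega>[at_infinity](\<lambda>x. exp (- b * \<bar>x\<bar> powr a))"
  from O obtain C where C: "C > 0" and EC: "eventually (\<lambda>x. norm (f x) \<le> C * norm (exp (- b * \<bar>x\<bar> powr a))) at_infinity"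
    by (elim landau_o.bigE) auto
  from Om obtain c where c: "c > 0" and Ec: "eventually (\<lambda>x. c * norm (exp (- b * \<bar>x\<bar> powr a)) \<le> norm (f x)) at_infinity"
    by (elim landau_omega.bigE) auto
  from EC obtain R1 where R1: "\<And>x. R1 \<le> norm x \<Longrightarrow> norm (f x) \<le> C * norm (exp (- b * \<bar>x\<bar> powr a))"
    unfolding eventually_at_infinity by blast
  from Ec obtain R2 where R2: "\<And>x. R2 \<le> norm x \<Longrightarrow> c * norm (exp (- b * \<bar>x\<bar> powr a)) \<le> norm (f x)"
    unfolding eventually_at_infinity by blast
  define R where "R = max 1 (max R1 R2)"
  have up: "f x \<le> C * exp (- b * \<bar>x\<bar> powr a)" and low: "c * exp (- b * \<bar>x\<bar> powr a) \<le> f x" if "R \<le> \<bar>x\<bar>" for x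
    using R1[of x] R2[of x] that assms(3)[of x] unfolding R_def by auto
  have T1: "TP f (2 powr a) (1/2)"
  proof (rule case_exp[OF assms(3) a b C c, of R])
    show "1 \<le> R" by (simp add: R_def)
  next
    fix t assume "R \<le> t" hence "R \<le> \<bar>t\<bar>" "t \<ge> 0" by (auto simp: R_def)
    thus "f t \<le> C * exp (- b * t powr a)" "c * exp (- b * t powr a) \<le> f t"
      using up[of t] low[of t] by auto
  qed
  have T2: "TP (\<lambda>t. f (-t)) (2 powr a) (1/2)"
  proof (rule case_exp[OF assms(3) a b C c, of R])
    show "1 \<le> R" by (simp add: R_def)
  next
    fix t assume "R \<le> t" hence "R \<le> \<bar>-t\<bar>" "t \<ge> 0" by (auto simp: R_def)
    thus "f (- t) \<le> C * exp (- b * t powr a)" "c * exp (- b * t powr a) \<le> f (- t)"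
      using up[of "-t"] low[of "-t"] by auto
  qed
  show ?thesis
    by (rule assemble[OF assms(1-6) _ _ T1 T2]) auto
qed

end
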